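(* Let $P(s)=\sum_{n=1}^Na_nn^{-s}$ ($N\in\mathbb{N}$) be a Dirichlet polynomial with real coefficients and $a_1>0$, and let $\rho$ be a completely multiplicative arithmetical function with $\rho^2=\rho$. If $P$ has no zeros in $\mathbb{C}_0=\{\mathrm{Re}\,s>0\}$, then $\sum_{n=1}^Na_n\rho(n)\ge0$; in particular $P(0)\ge0$. If in addition $P(0)>0$, then $\sum_{n=1}^Na_n\rho(n)>0$.
   Context: A completely multiplicative arithmetical function satisfies $\rho(1)=1$ and $\rho(mn)=\rho(m)\rho(n)$ for all $m,n\ge1$; $\rho^2=\rho$ means $\rho$ takes values in $\{0,1\}$. *)

theory Defs
  imports "HOL-Analysis.Analysis"
begin

definition dirichlet_poly :: "nat \<Rightarrow> (nat \<Rightarrow> real) \<Rightarrow> complex \<Rightarrow> complex" where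
  "dirichlet_poly N a s = (\<Sum>n=1..N. complex_of_real (a n) * (of_nat n) powr (- s))"

definition completely_multiplicative :: "(nat \<Rightarrow> real) \<Rightarrow> bool" where
  "completely_multiplicative \<rho> \<longleftrightarrow> \<rho> 1 = 1 \<and> (\<forall>m n. m \<ge> 1 \<longrightarrow> n \<ge> 1 \<longrightarrow> \<rho> (m * n) = \<rho> m * \<rho> n)"

end

theory Submission
  imports Defs "HOL-Complex_Analysis.Complex_Analysis" "HOL-Computational_Algebra.Primes"
begin


lemma ln_primes_indep:
  assumes P: "\<And>p. p \<in> P \<Longrightarrow> prime (p::nat)"
  shows "module.independent (\<lambda>r. (*) (real_of_int r)) ((\<lambda>p. ln (real p)) ` P)"
proof -
  interpret Modules.module "(\<lambda>r. (*) (real_of_int r))"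
    by (simp add: Modules.module.intro distrib_left mult.commute)
  have injln: "inj_on (\<lambda>p. ln (real p)) P"
    by (intro inj_onI) (metis P ln_inj_iff of_nat_0_less_iff of_nat_eq_iff prime_gt_0_nat)
  show ?thesis
    unfolding independent_explicit_module
  proof (intro allI impI)
    fix t u v
    assume t: "finite t" "t \<subseteq> (\<lambda>p. ln (real p)) ` P"
      and s: "(\<Sum>v\<in>t. real_of_int (u v) * v) = 0" and v: "v \<in> t"
    obtain T where T: "T \<subseteq> P" "t = (\<lambda>p. ln (real p)) ` T"
      using t(2) by (auto simp: subset_image_iff)
    have injT: "inj_on (\<lambda>p. ln (real p)) T" using injln T(1) inj_on_subset by blast
    have fT: "finite T" using t(1) T(2) injT finite_image_iff by blast
    define e where "e p = u (ln (real p))" for p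
    have s2: "(\<Sum>p\<in>T. real_of_int (e p) * ln (real p)) = 0"
      using s unfolding T(2) e_def by (simp add: sum.reindex[OF injT])
    define A where "A = (\<Prod>p\<in>T. p ^ nat (e p))"
    define B where "B = (\<Prod>p\<in>T. p ^ nat (- e p))"
    have pT: "\<And>p. p \<in> T \<Longrightarrow> prime p" using T(1) P by blast
    have Apos: "A > 0" unfolding A_def using pT prime_gt_0_nat by (intro prod_pos) auto
    have Bpos: "B > 0" unfolding B_def using pT prime_gt_0_nat by (intro prod_pos) auto
    have lnA: "ln (real A) = (\<Sum>p\<in>T. real (nat (e p)) * ln (real p))"
      unfolding A_def of_nat_prod
      by (subst ln_prod) (use pT prime_gt_0_nat fT in \<open>auto simp: ln_realpow\<close>)
    have lnB: "ln (real B) = (\<Sum>p\<in>T. real (nat (- e p)) * ln (real p))"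
      unfolding B_def of_nat_prod
      by (subst ln_prod) (use pT prime_gt_0_nat fT in \<open>auto simp: ln_realpow\<close>)
    have "ln (real A) - ln (real B) = (\<Sum>p\<in>T. real_of_int (e p) * ln (real p))"
      unfolding lnA lnB sum_subtractf[symmetric]
      by (intro sum.cong refl) (simp add: left_diff_distrib[symmetric], linarith)
    then have "ln (real A) = ln (real B)" using s2 by simp
    then have AB: "A = B" using Apos Bpos by simp
    obtain p where p: "p \<in> T" "v = ln (real p)" using v T(2) by auto
    have "multiplicity p A = nat (e p)" unfolding A_def
      by (subst multiplicity_prod_prime_powers) (use fT pT p in auto)
    moreover have "multiplicity p B = nat (- e p)" unfolding B_def
      by (subst multiplicity_prod_prime_powers) (use fT pT p in auto)
    ultimately have "e p = 0" using AB by simp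
    then show "u v = 0" using p e_def by simp
  qed
qed



lemma kron_primes:
  assumes fP: "finite P" and P: "\<And>p. p \<in> P \<Longrightarrow> prime (p::nat)" and e: "\<epsilon> > 0"
  obtains t where "\<And>p. p \<in> P \<Longrightarrow> \<exists>h::int. \<bar>t * ln (real p) - h - \<alpha> p\<bar> < \<epsilon>"
proof -
  define xs where "xs = sorted_list_of_set P"
  define n where "n = length xs"
  define \<theta> where "\<theta> i = ln (real (xs ! i))" for i
  have setxs: "set xs = P" "distinct xs" using fP by (auto simp: xs_def)
  have img: "\<theta> ` {..<n} = (\<lambda>p. ln (real p)) ` P"
  proof -
    have "(!) xs ` {..<n} = P" using setxs n_def by (metis atLeast_upt image_set map_nth set_map)
    then show ?thesis unfolding \<theta>_def by (metis image_image)
  qed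
  have injln: "inj_on (\<lambda>p. ln (real p)) P"
    by (intro inj_onI) (metis P ln_inj_iff of_nat_0_less_iff of_nat_eq_iff prime_gt_0_nat)
  have inj: "inj_on \<theta> {..<n}"
  proof (intro inj_onI)
    fix i j assume ij: "i \<in> {..<n}" "j \<in> {..<n}" "\<theta> i = \<theta> j"
    then have "xs ! i \<in> P" "xs ! j \<in> P" using setxs n_def by auto
    then have "xs ! i = xs ! j" using ij(3) injln unfolding \<theta>_def inj_on_def by blast
    then show "i = j" using ij setxs(2) n_def nth_eq_iff_index_eq by auto
  qed
  have ind: "module.independent (\<lambda>r. (*) (real_of_int r)) (\<theta> ` {..<n})"
    unfolding img by (rule ln_primes_indep) (use P in auto)
  obtain t h where th: "\<And>i. i < n \<Longrightarrow> \<bar>t * \<theta> i - real_of_int (h i) - (\<alpha> \<circ> (!) xs) i\<bar> < \<epsilon>"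
    using Kronecker_thm_1[OF ind inj e] by blast
  show ?thesis
  proof (rule that)
    fix p assume "p \<in> P"
    then obtain i where "i < n" "p = xs ! i" using setxs n_def by (metis in_set_conv_nth)
    then show "\<exists>h::int. \<bar>t * ln (real p) - h - \<alpha> p\<bar> < \<epsilon>"
      using th[of i] unfolding \<theta>_def by auto
  qed
qed



definition Om :: "(nat \<Rightarrow> real) \<Rightarrow> nat \<Rightarrow> nat" where
  "Om \<rho> n = (\<Sum>p\<in>prime_factors n. if \<rho> p = 1 then 0 else multiplicity p n)"

lemma ln_nat_factor:
  assumes "n > 0"
  shows "ln (real n) = (\<Sum>p\<in>prime_factors n. real (multiplicity p n) * ln (real p))"
proof -
  have "real n = real (\<Prod>p\<in>prime_factors n. p ^ multiplicity p n)"
    using prime_factorization_nat[OF assms] by (rule arg_cong)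
  then have "real n = (\<Prod>p\<in>prime_factors n. real p ^ multiplicity p n)"
    unfolding of_nat_prod of_nat_power .
  then have "ln (real n) = (\<Sum>p\<in>prime_factors n. ln (real p ^ multiplicity p n))"
    by (simp only:) (rule ln_prod, simp, simp add: in_prime_factors_imp_prime prime_gt_0_nat)
  also have "\<dots> = (\<Sum>p\<in>prime_factors n. real (multiplicity p n) * ln (real p))"
    by (intro sum.cong refl) (simp add: ln_realpow in_prime_factors_imp_prime prime_gt_0_nat)
  finally show ?thesis .
qed

lemma Om_power:
  "(z::complex) ^ Om \<rho> n = (\<Prod>p\<in>prime_factors n. (if \<rho> p = 1 then 1 else z) ^ multiplicity p n)"
  unfolding Om_def power_sum by (intro prod.cong refl) auto

lemma twist_conv:
  assumes "norm z = 1"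
  obtains T :: "nat \<Rightarrow> real" where
    "\<And>n. n \<in> {1..N} \<Longrightarrow> (\<lambda>m. exp (- \<i> * of_real (T m) * of_real (ln (real n)))) \<longlonglongrightarrow> z ^ Om \<rho> n"
proof -
  obtain \<phi> where z: "z = exp (\<i> * of_real \<phi>)" using assms complex_norm_eq_1_exp by metis
  define P where "P = {p. prime p \<and> p \<le> N}"
  have fP: "finite P" unfolding P_def by auto
  define \<alpha> where "\<alpha> p = (if \<rho> p = 1 then 0 else - \<phi> / (2*pi))" for p
  have "\<forall>m::nat. \<exists>t. \<forall>p\<in>P. \<exists>h::int. \<bar>t * ln (real p) - h - \<alpha> p\<bar> < 1 / (real m + 1)"
  proof
    fix m :: nat
    obtain t where "\<And>p. p \<in> P \<Longrightarrow> \<exists>h::int. \<bar>t * ln (real p) - h - \<alpha> p\<bar> < 1 / (real m + 1)"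
      using kron_primes[OF fP, of "1 / (real m + 1)" \<alpha>] unfolding P_def by auto
    then show "\<exists>t. \<forall>p\<in>P. \<exists>h::int. \<bar>t * ln (real p) - h - \<alpha> p\<bar> < 1 / (real m + 1)" by blast
  qed
  then obtain t where t: "\<And>m p. p \<in> P \<Longrightarrow> \<exists>h::int. \<bar>t m * ln (real p) - h - \<alpha> p\<bar> < 1 / (real m + 1)"
    by metis
  define T where "T m = 2 * pi * t m" for m
  define w where "w p = (if \<rho> p = 1 then 1 else z)" for p
  have pc: "(\<lambda>m. exp (- \<i> * of_real (T m) * of_real (ln (real p)))) \<longlonglongrightarrow> w p" if p: "p \<in> P" for p
  proof -
    obtain H :: "nat \<Rightarrow> int" where H: "\<And>m. \<bar>t m * ln (real p) - H m - \<alpha> p\<bar> < 1 / (real m + 1)"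
      using t[OF p] by metis
    define e where "e m = t m * ln (real p) - H m - \<alpha> p" for m
    have e0: "e \<longlonglongrightarrow> 0"
    proof (rule Lim_null_comparison)
      show "\<forall>\<^sub>F m in sequentially. norm (e m) \<le> 1 / (real m + 1)"
        using H by (auto simp: e_def less_imp_le)
      show "(\<lambda>m. 1 / (real m + 1)) \<longlonglongrightarrow> 0"
        using LIMSEQ_inverse_real_of_nat by (simp add: inverse_eq_divide add.commute)
    qed
    have wa: "exp (- 2 * pi * \<i> * of_real (\<alpha> p)) = w p"
      unfolding w_def \<alpha>_def z by auto
    have eq: "exp (- \<i> * of_real (T m) * of_real (ln (real p))) = w p * exp (- 2 * pi * \<i> * of_real (e m))" for m
    proof -
      have "T m * ln (real p) = 2 * pi * (H m) + 2 * pi * \<alpha> p + 2 * pi * e m"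
        unfolding T_def e_def by (simp add: algebra_simps)
      then have "- \<i> * of_real (T m) * of_real (ln (real p)) =
          - (2 * pi * \<i> * of_int (H m)) + (- 2 * pi * \<i> * of_real (\<alpha> p)) + (- 2 * pi * \<i> * of_real (e m))"
      proof -
        assume h: "T m * ln (real p) = 2 * pi * (H m) + 2 * pi * \<alpha> p + 2 * pi * e m"
        have "complex_of_real (T m) * complex_of_real (ln (real p)) =
            complex_of_real (2 * pi * (H m) + 2 * pi * \<alpha> p + 2 * pi * e m)"
          by (simp only: of_real_mult[symmetric] h)
        then have "\<i> * complex_of_real (T m) * complex_of_real (ln (real p)) =
            \<i> * complex_of_real (2 * pi * (H m) + 2 * pi * \<alpha> p + 2 * pi * e m)"
          by (simp only: mult.assoc)
        then show ?thesis by (simp add: algebra_simps)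
      qed
      then have "exp (- \<i> * of_real (T m) * of_real (ln (real p))) =
          exp (- (2 * pi * \<i> * of_int (H m))) * exp (- 2 * pi * \<i> * of_real (\<alpha> p)) * exp (- 2 * pi * \<i> * of_real (e m))"
        by (simp only: exp_add)
      moreover have "exp (- (2 * pi * \<i> * of_int (H m))) = 1"
        by (simp add: exp_eq_1, rule exI[of _ "- H m"], simp)
      ultimately show ?thesis using wa by simp
    qed
    have "(\<lambda>m. w p * exp (- 2 * pi * \<i> * of_real (e m))) \<longlonglongrightarrow> w p * exp (- 2 * pi * \<i> * of_real 0)"
      by (intro tendsto_intros e0)
    then show ?thesis unfolding eq by simp
  qed
  show ?thesis
  proof (rule that)
    fix n assume n: "n \<in> {1..N}"
    have sub: "prime_factors n \<subseteq> P"
      using n unfolding P_def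
      by (auto simp: in_prime_factors_iff dest!: dvd_imp_le)
    have eqn: "exp (- \<i> * of_real (T m) * of_real (ln (real n))) =
        (\<Prod>p\<in>prime_factors n. exp (- \<i> * of_real (T m) * of_real (ln (real p))) ^ multiplicity p n)" for m
    proof -
      have "- \<i> * of_real (T m) * of_real (ln (real n)) =
          (\<Sum>p\<in>prime_factors n. of_nat (multiplicity p n) * (- \<i> * of_real (T m) * of_real (ln (real p))))"
        using n by (subst ln_nat_factor[of n]) (auto simp: sum_distrib_left algebra_simps)
      then show ?thesis by (simp only: exp_sum[OF finite_set_mset] exp_of_nat_mult)
    qed
    have "(\<lambda>m. \<Prod>p\<in>prime_factors n. exp (- \<i> * of_real (T m) * of_real (ln (real p))) ^ multiplicity p n)
        \<longlonglongrightarrow> (\<Prod>p\<in>prime_factors n. w p ^ multiplicity p n)"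
      proof (rule tendsto_prod)
      fix p assume "p \<in> prime_factors n"
      then have "p \<in> P" using sub by blast
      from pc[OF this] show "(\<lambda>m. exp (- \<i> * of_real (T m) * of_real (ln (real p))) ^ multiplicity p n)
          \<longlonglongrightarrow> w p ^ multiplicity p n" by (rule tendsto_power)
    qed
    then show "(\<lambda>m. exp (- \<i> * of_real (T m) * of_real (ln (real n)))) \<longlonglongrightarrow> z ^ Om \<rho> n"
      unfolding eqn Om_power w_def .
  qed
qed



definition Hf :: "nat \<Rightarrow> (nat \<Rightarrow> real) \<Rightarrow> (nat \<Rightarrow> real) \<Rightarrow> complex \<Rightarrow> complex \<Rightarrow> complex" where
  "Hf N a \<rho> s z = (\<Sum>n=1..N. of_real (a n) * exp (- s * of_real (ln (real n))) * z ^ Om \<rho> n)"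

lemma unif_from_bound:
  assumes "\<And>m x. x \<in> K \<Longrightarrow> norm (F m x - g x) \<le> b m" "b \<longlonglongrightarrow> 0"
  shows "uniform_limit K F g sequentially"
  unfolding uniform_limit_iff
proof (intro allI impI)
  fix e :: real assume e: "e > 0"
  have "\<forall>\<^sub>F m in sequentially. b m < e" using order_tendstoD(2)[OF assms(2) e] .
  then show "\<forall>\<^sub>F m in sequentially. \<forall>x\<in>K. dist (F m x) (g x) < e"
    by (rule eventually_mono) (use assms(1) in \<open>auto simp: dist_norm intro: le_less_trans\<close>)
qed

lemma dp_eq: "dirichlet_poly N a s = Hf N a \<rho> s 1"
  unfolding dirichlet_poly_def Hf_def
  by (intro sum.cong refl) (auto simp: powr_def)

lemma Om_1 [simp]: "Om \<rho> 1 = 0" "Om \<rho> (Suc 0) = 0"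
  by (simp_all add: Om_def)

lemma Hf_cont: "continuous_on UNIV (\<lambda>x. Hf N a \<rho> (of_real (fst x)) (snd x))"
  unfolding Hf_def by (intro continuous_intros)

lemma Hf_hol_z: "Hf N a \<rho> s holomorphic_on A"
  unfolding Hf_def by (intro holomorphic_intros)

lemma Hf_hol_s: "(\<lambda>s. Hf N a \<rho> s z) holomorphic_on A"
  unfolding Hf_def by (intro holomorphic_intros)

lemma Hf_diff_bound:
  assumes "norm z \<le> 1"
  shows "norm (Hf N a \<rho> s z - Hf N a \<rho> s' z) \<le>
     (\<Sum>n=1..N. \<bar>a n\<bar> * norm (exp (- s * of_real (ln (real n))) - exp (- s' * of_real (ln (real n)))))"
proof -
  have "Hf N a \<rho> s z - Hf N a \<rho> s' z = (\<Sum>n=1..N. of_real (a n) *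
      (exp (- s * of_real (ln (real n))) - exp (- s' * of_real (ln (real n)))) * z ^ Om \<rho> n)"
    unfolding Hf_def sum_subtractf[symmetric] by (intro sum.cong refl) (simp add: algebra_simps)
  also have "norm \<dots> \<le> (\<Sum>n=1..N. norm (of_real (a n) *
      (exp (- s * of_real (ln (real n))) - exp (- s' * of_real (ln (real n)))) * z ^ Om \<rho> n))"
    by (rule norm_sum)
  also have "\<dots> \<le> (\<Sum>n=1..N. \<bar>a n\<bar> * norm (exp (- s * of_real (ln (real n))) - exp (- s' * of_real (ln (real n)))))"
  proof (rule sum_mono)
    fix n
    have "norm (z ^ Om \<rho> n) \<le> 1" using assms by (simp add: norm_power power_le_one)
    then show "norm (of_real (a n) * (exp (- s * of_real (ln (real n))) - exp (- s' * of_real (ln (real n)))) * z ^ Om \<rho> n)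
        \<le> \<bar>a n\<bar> * norm (exp (- s * of_real (ln (real n))) - exp (- s' * of_real (ln (real n))))"
      unfolding norm_mult by (simp add: mult_left_le)
  qed
  finally show ?thesis .
qed

lemma Hf_large:
  assumes a1: "a 1 > 0" and N: "N \<ge> 1"
  obtains \<sigma>b where "\<sigma>b > 0" "\<And>s z. Re s \<ge> \<sigma>b \<Longrightarrow> norm (z::complex) \<le> 1 \<Longrightarrow> norm (Hf N a \<rho> s z - of_real (a 1)) < a 1"
proof -
  define C where "C = (\<Sum>n=2..N. \<bar>a n\<bar>)"
  have C0: "C \<ge> 0" unfolding C_def by (intro sum_nonneg) auto
  define \<sigma>b where "\<sigma>b = C / (a 1 * ln 2) + 1"
  have \<sigma>b: "\<sigma>b > 0" unfolding \<sigma>b_def using C0 a1 by (intro add_nonneg_pos divide_nonneg_pos mult_pos_pos) auto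
  have key: "C * exp (- \<sigma>b * ln 2) < a 1"
  proof -
    have "a 1 * (\<sigma>b * ln 2) > C"
      using a1 C0 unfolding \<sigma>b_def by (simp add: field_simps)
    also have "a 1 * (\<sigma>b * ln 2) \<le> a 1 * exp (\<sigma>b * ln 2)"
      using a1 by (intro mult_left_mono) (auto intro: order_trans[OF _ exp_ge_add_one_self])
    finally have "C < a 1 * exp (\<sigma>b * ln 2)" .
    then show ?thesis by (simp add: exp_minus field_simps)
  qed
  show ?thesis
  proof (rule that[OF \<sigma>b])
    fix s and z :: complex assume s: "Re s \<ge> \<sigma>b" and z: "norm z \<le> 1"
    have split: "{1..N} = insert 1 {2..N}" using N by auto
    have "Hf N a \<rho> s z - of_real (a 1) = (\<Sum>n=2..N. of_real (a n) * exp (- s * of_real (ln (real n))) * z ^ Om \<rho> n)"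
      unfolding Hf_def split by (subst sum.insert) auto
    also have "norm \<dots> \<le> (\<Sum>n=2..N. norm (of_real (a n) * exp (- s * of_real (ln (real n))) * z ^ Om \<rho> n))"
      by (rule norm_sum)
    also have "\<dots> \<le> (\<Sum>n=2..N. \<bar>a n\<bar> * exp (- \<sigma>b * ln 2))"
    proof (rule sum_mono)
      fix n assume n: "n \<in> {2..N}"
      have "norm (z ^ Om \<rho> n) \<le> 1" using z by (simp add: norm_power power_le_one)
      moreover have "norm (exp (- s * of_real (ln (real n)))) \<le> exp (- \<sigma>b * ln 2)"
      proof -
        have "norm (exp (- s * of_real (ln (real n)))) = exp (- Re s * ln (real n))"
          by (simp add: norm_exp_eq_Re)
        also have "\<dots> \<le> exp (- \<sigma>b * ln 2)"
        proof -
          have "ln 2 \<le> ln (real n)" using n by auto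
          then have "\<sigma>b * ln 2 \<le> Re s * ln (real n)"
            using s \<sigma>b by (intro mult_mono) auto
          then show ?thesis by simp
        qed
        finally show ?thesis .
      qed
      ultimately have "norm (exp (- s * of_real (ln (real n)))) * norm (z ^ Om \<rho> n) \<le> exp (- \<sigma>b * ln 2)"
        by (meson mult_left_le norm_ge_zero order_trans)
      then have "\<bar>a n\<bar> * (norm (exp (- s * of_real (ln (real n)))) * norm (z ^ Om \<rho> n)) \<le> \<bar>a n\<bar> * exp (- \<sigma>b * ln 2)"
        by (rule mult_left_mono) simp
      then show "norm (of_real (a n) * exp (- s * of_real (ln (real n))) * z ^ Om \<rho> n) \<le> \<bar>a n\<bar> * exp (- \<sigma>b * ln 2)"
        by (simp only: norm_mult norm_of_real mult.assoc)
    qed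
    also have "\<dots> = C * exp (- \<sigma>b * ln 2)" unfolding C_def by (simp add: sum_distrib_right)
    also have "\<dots> < a 1" by (rule key)
    finally show "norm (Hf N a \<rho> s z - of_real (a 1)) < a 1" .
  qed
qed



lemma norm_exp_le1:
  assumes "Re s \<ge> 0" "n \<ge> 1"
  shows "norm (exp (- s * of_real (ln (real n)))) \<le> 1"
proof -
  have "norm (exp (- s * of_real (ln (real n)))) = exp (- (Re s * ln (real n)))"
    by (simp add: norm_exp_eq_Re)
  also have "\<dots> \<le> 1" using assms by simp
  finally show ?thesis .
qed

lemma lemA:
  assumes a1: "a 1 > 0" and N: "N \<ge> 1" and nz: "\<forall>s. Re s > 0 \<longrightarrow> dirichlet_poly N a s \<noteq> 0"
    and s: "Re s > 0" and z: "norm z = 1"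
  shows "Hf N a \<rho> s z \<noteq> 0"
proof -
  obtain T where T: "\<And>n. n \<in> {1..N} \<Longrightarrow> (\<lambda>m. exp (- \<i> * of_real (T m) * of_real (ln (real n)))) \<longlonglongrightarrow> z ^ Om \<rho> n"
    using twist_conv[OF z, where N=N and \<rho>=\<rho>] by blast
  obtain \<sigma>b where \<sigma>b: "\<sigma>b > 0" "\<And>s z. Re s \<ge> \<sigma>b \<Longrightarrow> norm (z::complex) \<le> 1 \<Longrightarrow> norm (Hf N a \<rho> s z - of_real (a 1)) < a 1"
    using Hf_large[where a=a and N=N and \<rho>=\<rho>, OF a1 N] by blast
  define S where "S = {s. Re s > 0}"
  define F where "F m s = Hf N a \<rho> (s + \<i> * of_real (T m)) 1" for m s
  define g where "g s = Hf N a \<rho> s z" for s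
  define b where "b m = (\<Sum>n=1..N. \<bar>a n\<bar> * norm (exp (- \<i> * of_real (T m) * of_real (ln (real n))) - z ^ Om \<rho> n))" for m
  have "b \<longlonglongrightarrow> (\<Sum>n=1..N. \<bar>a n\<bar> * norm (z ^ Om \<rho> n - z ^ Om \<rho> n))"
    unfolding b_def
  proof (rule tendsto_sum)
    fix n assume n: "n \<in> {1..N}"
    show "(\<lambda>m. \<bar>a n\<bar> * norm (exp (- \<i> * of_real (T m) * of_real (ln (real n))) - z ^ Om \<rho> n))
        \<longlonglongrightarrow> \<bar>a n\<bar> * norm (z ^ Om \<rho> n - z ^ Om \<rho> n)"
      by (intro tendsto_mult_left tendsto_norm tendsto_diff T[OF n] tendsto_const)
  qed
  then have b0: "b \<longlonglongrightarrow> 0" by simp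
  have bound: "norm (F m s - g s) \<le> b m" if s: "s \<in> S" for m s
  proof -
    have "F m s - g s = (\<Sum>n=1..N. of_real (a n) * exp (- s * of_real (ln (real n))) *
        (exp (- \<i> * of_real (T m) * of_real (ln (real n))) - z ^ Om \<rho> n))"
      unfolding F_def g_def Hf_def sum_subtractf[symmetric]
      by (intro sum.cong refl) (simp add: algebra_simps exp_add[symmetric])
    also have "norm \<dots> \<le> (\<Sum>n=1..N. norm (of_real (a n) * exp (- s * of_real (ln (real n))) *
        (exp (- \<i> * of_real (T m) * of_real (ln (real n))) - z ^ Om \<rho> n)))"
      by (rule norm_sum)
    also have "\<dots> \<le> b m" unfolding b_def
    proof (rule sum_mono)
      fix n assume n: "n \<in> {1..N}"
      have e1: "norm (exp (- s * of_real (ln (real n)))) \<le> 1"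
        using s n by (intro norm_exp_le1) (auto simp: S_def)
      have "norm (exp (- s * of_real (ln (real n)))) * norm (exp (- \<i> * of_real (T m) * of_real (ln (real n))) - z ^ Om \<rho> n)
          \<le> norm (exp (- \<i> * of_real (T m) * of_real (ln (real n))) - z ^ Om \<rho> n)"
        using e1 by (simp add: mult_left_le_one_le)
      then have "\<bar>a n\<bar> * (norm (exp (- s * of_real (ln (real n)))) * norm (exp (- \<i> * of_real (T m) * of_real (ln (real n))) - z ^ Om \<rho> n))
          \<le> \<bar>a n\<bar> * norm (exp (- \<i> * of_real (T m) * of_real (ln (real n))) - z ^ Om \<rho> n)"
        by (rule mult_left_mono) simp
      then show "norm (of_real (a n) * exp (- s * of_real (ln (real n))) *
          (exp (- \<i> * of_real (T m) * of_real (ln (real n))) - z ^ Om \<rho> n))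
          \<le> \<bar>a n\<bar> * norm (exp (- \<i> * of_real (T m) * of_real (ln (real n))) - z ^ Om \<rho> n)"
        by (simp only: norm_mult norm_of_real mult.assoc)
    qed
    finally show ?thesis .
  qed
  have ul: "uniform_limit S F g sequentially"
    by (rule unif_from_bound[OF _ b0]) (rule bound)
  have openS: "open S" unfolding S_def by (rule open_halfspace_Re_gt)
  have connS: "connected S" unfolding S_def by (rule convex_connected, rule convex_halfspace_Re_gt)
  have holF: "F m holomorphic_on S" for m
    unfolding F_def Hf_def by (intro holomorphic_intros)
  have holg: "g holomorphic_on S" unfolding g_def by (rule Hf_hol_s)
  have nzF: "F m s \<noteq> 0" if "s \<in> S" for m s
    using nz that unfolding F_def S_def dp_eq[where \<rho>=\<rho>, symmetric] by simp
  have sS: "s \<in> S" using s by (simp add: S_def)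
  have bS: "complex_of_real \<sigma>b \<in> S" using \<sigma>b(1) by (simp add: S_def)
  have gb: "g (complex_of_real \<sigma>b) \<noteq> 0"
  proof
    assume "g (complex_of_real \<sigma>b) = 0"
    then show False using \<sigma>b(2)[of "complex_of_real \<sigma>b" z] z by (simp add: g_def)
  qed
  show ?thesis
  proof (cases "g constant_on S")
    case True
    then obtain c where "\<And>x. x \<in> S \<Longrightarrow> g x = c" unfolding constant_on_def by blast
    then have "g s = g (complex_of_real \<sigma>b)" using sS bS by metis
    then show ?thesis using gb by (simp add: g_def)
  next
    case False
    have "g s \<noteq> 0"
      by (rule Hurwitz_no_zeros[OF openS connS holF holg _ False nzF sS])
         (rule uniform_limit_on_subset[OF ul], assumption)
    then show ?thesis by (simp add: g_def)
  qed
qed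



lemma Hf_unif:
  assumes "\<sigma>s \<longlonglongrightarrow> \<tau>"
  shows "uniform_limit (cball 0 1) (\<lambda>m. Hf N a \<rho> (of_real (\<sigma>s m))) (Hf N a \<rho> (of_real \<tau>)) sequentially"
proof (rule unif_from_bound)
  define b where "b m = (\<Sum>n=1..N. \<bar>a n\<bar> * norm (exp (- complex_of_real (\<sigma>s m) * of_real (ln (real n)))
      - exp (- complex_of_real \<tau> * of_real (ln (real n)))))" for m
  show "norm (Hf N a \<rho> (of_real (\<sigma>s m)) x - Hf N a \<rho> (of_real \<tau>) x) \<le> b m" if "x \<in> cball 0 1" for m x
    unfolding b_def by (rule Hf_diff_bound) (use that in auto)
  have "b \<longlonglongrightarrow> (\<Sum>n=1..N. \<bar>a n\<bar> * norm (exp (- complex_of_real \<tau> * of_real (ln (real n)))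
      - exp (- complex_of_real \<tau> * of_real (ln (real n)))))"
    unfolding b_def by (intro tendsto_intros assms)
  then show "b \<longlonglongrightarrow> 0" by simp
qed

lemma inv_Suc_tendsto: "(\<lambda>m. 1 / (real m + 1)) \<longlonglongrightarrow> 0"
  using LIMSEQ_inverse_real_of_nat by (simp add: inverse_eq_divide add.commute)

lemma Hf_nonconst:
  assumes "Hf N a \<rho> s 1 \<noteq> Hf N a \<rho> s w" "norm w < 1"
  shows "\<not> Hf N a \<rho> s constant_on ball 0 1"
proof
  assume c: "Hf N a \<rho> s constant_on ball 0 1"
  have cont: "continuous_on (closure (ball 0 1)) (Hf N a \<rho> s)"
    by (rule holomorphic_on_imp_continuous_on, rule Hf_hol_z)
  have "Hf N a \<rho> s constant_on closure (ball 0 1)"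
    by (rule constant_on_closureI[OF c cont])
  then have "Hf N a \<rho> s constant_on cball 0 1" by simp
  then show False using assms unfolding constant_on_def by (metis mem_cball_0 norm_one order.refl less_imp_le)
qed

lemma lemB:
  assumes a1: "a 1 > 0" and N: "N \<ge> 1" and nz: "\<forall>s. Re s > 0 \<longrightarrow> dirichlet_poly N a s \<noteq> 0"
    and \<sigma>: "\<sigma> > 0" and z: "norm z \<le> 1"
  shows "Hf N a \<rho> (of_real \<sigma>) z \<noteq> 0"
proof
  assume h0: "Hf N a \<rho> (of_real \<sigma>) z = 0"
  obtain \<sigma>b where \<sigma>b: "\<sigma>b > 0" "\<And>s z. Re s \<ge> \<sigma>b \<Longrightarrow> norm (z::complex) \<le> 1 \<Longrightarrow> norm (Hf N a \<rho> s z - of_real (a 1)) < a 1"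
    using Hf_large[where a=a and N=N and \<rho>=\<rho>, OF a1 N] by blast
  have large: "Hf N a \<rho> s w \<noteq> 0" if "Re s \<ge> \<sigma>b" "norm w \<le> 1" for s w
    using \<sigma>b(2)[OF that] by auto
  have "\<sigma> < \<sigma>b" using large[of "of_real \<sigma>" z] h0 z by force
  define hh where "hh x = Hf N a \<rho> (complex_of_real (fst x)) (snd x)" for x :: "real \<times> complex"
  define K where "K = {\<sigma>..\<sigma>b} \<times> cball (0::complex) 1"
  define Z where "Z = K \<inter> {x \<in> K. hh x = 0}"
  have contK: "continuous_on K hh"
    using Hf_cont[of N a \<rho>] unfolding hh_def by (rule continuous_on_subset) auto
  have "closed K" unfolding K_def by (intro closed_Times closed_atLeastAtMost closed_cball)
  then have "closed {x \<in> K. hh x = 0}" by (rule continuous_closed_preimage_constant[OF contK])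
  moreover have "compact K" unfolding K_def by (intro compact_Times compact_Icc compact_cball)
  ultimately have cZ: "compact Z" unfolding Z_def by (rule compact_Int_closed[rotated])
  have inZ: "(\<sigma>, z) \<in> Z" using h0 z \<open>\<sigma> < \<sigma>b\<close> by (simp add: Z_def K_def hh_def)
  have "compact (fst ` Z)" by (intro compact_continuous_image continuous_intros cZ)
  moreover have "fst ` Z \<noteq> {}" using inZ by blast
  ultimately obtain \<sigma>1 where s1: "\<sigma>1 \<in> fst ` Z" "\<And>t. t \<in> fst ` Z \<Longrightarrow> t \<le> \<sigma>1"
    using compact_attains_sup by metis
  then obtain z1 where z1Z: "(\<sigma>1, z1) \<in> Z" by force
  then have s1ge: "\<sigma> \<le> \<sigma>1" and z1n: "norm z1 \<le> 1" and h1: "Hf N a \<rho> (of_real \<sigma>1) z1 = 0"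
    by (auto simp: Z_def K_def hh_def)
  have s1pos: "\<sigma>1 > 0" using s1ge \<sigma> by simp
  have "norm z1 \<noteq> 1"
    using lemA[OF a1 N nz, of "of_real \<sigma>1" z1 \<rho>] h1 s1pos by auto
  then have z1b: "z1 \<in> ball 0 1" using z1n by simp
  have above: "Hf N a \<rho> (of_real \<tau>) w \<noteq> 0" if "\<tau> > \<sigma>1" "norm w \<le> 1" for \<tau> w
  proof
    assume hw: "Hf N a \<rho> (of_real \<tau>) w = 0"
    show False
    proof (cases "\<tau> \<ge> \<sigma>b")
      case True then show False using large[of "of_real \<tau>" w] hw that by simp
    next
      case False
      then have "(\<tau>, w) \<in> Z" using that hw s1ge by (simp add: Z_def K_def hh_def)
      then have "\<tau> \<le> \<sigma>1" using s1(2) by force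
      then show False using that by simp
    qed
  qed
  define F where "F m = Hf N a \<rho> (of_real (\<sigma>1 + 1 / (real m + 1)))" for m
  have conv: "(\<lambda>m. \<sigma>1 + 1 / (real m + 1)) \<longlonglongrightarrow> \<sigma>1 + 0"
    by (intro tendsto_add tendsto_const inv_Suc_tendsto)
  have ul: "uniform_limit (cball 0 1) F (Hf N a \<rho> (of_real \<sigma>1)) sequentially"
    unfolding F_def using Hf_unif[OF conv[simplified], of N a \<rho>] .
  have nzF: "F m w \<noteq> 0" if "w \<in> ball 0 1" for m w
    unfolding F_def using that by (intro above) (auto simp: add_pos_pos)
  have nc: "\<not> Hf N a \<rho> (of_real \<sigma>1) constant_on ball 0 1"
  proof (rule Hf_nonconst)
    show "Hf N a \<rho> (of_real \<sigma>1) 1 \<noteq> Hf N a \<rho> (of_real \<sigma>1) z1"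
      using lemA[OF a1 N nz, of "of_real \<sigma>1" 1 \<rho>] h1 s1pos by simp
    show "norm z1 < 1" using z1b by simp
  qed
  have "Hf N a \<rho> (of_real \<sigma>1) z1 \<noteq> 0"
  proof (rule Hurwitz_no_zeros[of "ball 0 1" F "Hf N a \<rho> (of_real \<sigma>1)" z1])
    show "open (ball (0::complex) 1)" "connected (ball (0::complex) 1)" by auto
    show "F m holomorphic_on ball 0 1" for m unfolding F_def by (rule Hf_hol_z)
    show "Hf N a \<rho> (of_real \<sigma>1) holomorphic_on ball 0 1" by (rule Hf_hol_z)
    show "uniform_limit K' F (Hf N a \<rho> (of_real \<sigma>1)) sequentially" if "compact K'" "K' \<subseteq> ball 0 1" for K'
      by (rule uniform_limit_on_subset[OF ul]) (use that ball_subset_cball in blast)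
    show "\<not> Hf N a \<rho> (of_real \<sigma>1) constant_on ball 0 1" by (rule nc)
    show "F m w \<noteq> 0" if "w \<in> ball 0 1" for m w using nzF that .
    show "z1 \<in> ball 0 1" by (rule z1b)
  qed
  then show False using h1 by simp
qed



lemma cm_pow:
  assumes cm: "completely_multiplicative \<rho>" and p: "p \<ge> 1"
  shows "\<rho> (p ^ k) = \<rho> p ^ k"
proof (induction k)
  case 0 then show ?case using cm by (simp add: completely_multiplicative_def)
next
  case (Suc k)
  have "p ^ k \<ge> 1" using p by simp
  then have "\<rho> (p * p ^ k) = \<rho> p * \<rho> (p ^ k)" using cm p by (simp add: completely_multiplicative_def)
  then show ?case using Suc by simp
qed

lemma cm_prod:
  assumes cm: "completely_multiplicative \<rho>"
  shows "finite A \<Longrightarrow> (\<forall>p\<in>A. p \<ge> 1) \<Longrightarrow> \<rho> (\<Prod>p\<in>A. p ^ e p) = (\<Prod>p\<in>A. \<rho> p ^ e p)"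
proof (induction A rule: finite_induct)
  case empty then show ?case using cm by (simp add: completely_multiplicative_def)
next
  case (insert x A)
  have x1: "x \<ge> 1" using insert by simp
  have "(\<Prod>p\<in>A. p ^ e p) \<ge> 1" using insert by (intro prod_ge_1) simp
  moreover have "x ^ e x \<ge> 1" using x1 by simp
  ultimately have "\<rho> (x ^ e x * (\<Prod>p\<in>A. p ^ e p)) = \<rho> (x ^ e x) * \<rho> (\<Prod>p\<in>A. p ^ e p)"
    using cm by (simp add: completely_multiplicative_def)
  then show ?case using insert cm_pow[OF cm x1] by simp
qed

lemma rho_Om:
  assumes cm: "completely_multiplicative \<rho>" and idem: "\<forall>n\<ge>1. \<rho> n * \<rho> n = \<rho> n" and n: "n \<ge> 1"
  shows "complex_of_real (\<rho> n) = 0 ^ Om \<rho> n"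
proof -
  have "\<rho> n = \<rho> (\<Prod>p\<in>prime_factors n. p ^ multiplicity p n)"
    using prime_factorization_nat[of n] n by simp
  also have "\<dots> = (\<Prod>p\<in>prime_factors n. \<rho> p ^ multiplicity p n)"
    by (rule cm_prod[OF cm]) (auto simp: in_prime_factors_iff Suc_le_eq prime_gt_0_nat)
  finally have "complex_of_real (\<rho> n) = (\<Prod>p\<in>prime_factors n. complex_of_real (\<rho> p) ^ multiplicity p n)"
    by simp
  also have "\<dots> = (\<Prod>p\<in>prime_factors n. (if \<rho> p = 1 then 1 else 0) ^ multiplicity p n)"
  proof (intro prod.cong refl)
    fix p assume "p \<in> prime_factors n"
    then have "p \<ge> 1" by (auto simp: in_prime_factors_iff Suc_le_eq prime_gt_0_nat)
    then have "\<rho> p * \<rho> p = \<rho> p" using idem by blast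
    then have "\<rho> p = 0 \<or> \<rho> p = 1" by (metis mult_cancel_right1 mult_eq_0_iff)
    then show "complex_of_real (\<rho> p) ^ multiplicity p n = (if \<rho> p = 1 then 1 else 0) ^ multiplicity p n"
      by auto
  qed
  also have "\<dots> = 0 ^ Om \<rho> n" by (rule Om_power[symmetric])
  finally show ?thesis .
qed

lemma posl:
  fixes f :: "real \<Rightarrow> real"
  assumes cont: "continuous_on UNIV f" and nz: "\<And>x. x > 0 \<Longrightarrow> f x \<noteq> 0" and b: "b > 0" "f b > 0"
  shows "\<And>x. x \<ge> 0 \<Longrightarrow> f x \<ge> 0"
proof (rule ccontr)
  fix x assume x: "x \<ge> 0" and "\<not> f x \<ge> 0"
  then have fx: "f x < 0" by simp
  show False
  proof (cases "x \<le> b")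
    case True
    obtain y where "y \<ge> x" "y \<le> b" "f y = 0"
      using IVT'[of f x 0 b] fx b True continuous_on_subset[OF cont] by force
    then show False using nz[of y] fx x by (cases "y = x") auto
  next
    case False
    obtain y where "y \<ge> b" "y \<le> x" "f y = 0"
      using IVT2'[of f x 0 b] fx b False continuous_on_subset[OF cont] by force
    then show False using nz[of y] b by auto
  qed
qed



theorem lemma6p2:
  fixes N :: nat and a :: "nat \<Rightarrow> real" and \<rho> :: "nat \<Rightarrow> real"
  assumes "N \<ge> 1"
    and "a 1 > 0"
    and "completely_multiplicative \<rho>"
    and "\<forall>n\<ge>1. \<rho> n * \<rho> n = \<rho> n"
    and "\<forall>s. Re s > 0 \<longrightarrow> dirichlet_poly N a s \<noteq> 0"
  shows "(\<Sum>n=1..N. a n * \<rho> n) \<ge> 0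
       \<and> Re (dirichlet_poly N a 0) \<ge> 0
       \<and> (Re (dirichlet_poly N a 0) > 0 \<longrightarrow> (\<Sum>n=1..N. a n * \<rho> n) > 0)"
proof -
  note N = assms(1) and a1 = assms(2) and cm = assms(3) and idem = assms(4) and nz = assms(5)
  define fr where "fr \<sigma> = (\<Sum>n=1..N. a n * \<rho> n * exp (- \<sigma> * ln (real n)))" for \<sigma>
  define fp where "fp \<sigma> = (\<Sum>n=1..N. a n * exp (- \<sigma> * ln (real n)))" for \<sigma>
  have ex: "exp (- complex_of_real \<sigma> * complex_of_real (ln (real n))) = complex_of_real (exp (- \<sigma> * ln (real n)))" for \<sigma> n
  proof -
    have "- complex_of_real \<sigma> * complex_of_real (ln (real n)) = complex_of_real (- \<sigma> * ln (real n))" by simp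
    then show ?thesis by (simp only: exp_of_real)
  qed
  have Hr: "Hf N a \<rho> (of_real \<sigma>) 0 = of_real (fr \<sigma>)" for \<sigma>
    unfolding Hf_def fr_def of_real_sum
  proof (intro sum.cong refl)
    fix n assume n: "n \<in> {1..N}"
    have "(0::complex) ^ Om \<rho> n = of_real (\<rho> n)" using rho_Om[OF cm idem] n by simp
    then show "complex_of_real (a n) * exp (- complex_of_real \<sigma> * complex_of_real (ln (real n))) * 0 ^ Om \<rho> n =
        complex_of_real (a n * \<rho> n * exp (- \<sigma> * ln (real n)))"
      by (simp only: ex of_real_mult mult_ac)
  qed
  have Hp: "Hf N a \<rho> (of_real \<sigma>) 1 = of_real (fp \<sigma>)" for \<sigma>
    unfolding Hf_def fp_def of_real_sum
    by (intro sum.cong refl) (simp only: ex of_real_mult power_one mult_1_right)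
  obtain \<sigma>b where \<sigma>b: "\<sigma>b > 0" "\<And>s z. Re s \<ge> \<sigma>b \<Longrightarrow> norm (z::complex) \<le> 1 \<Longrightarrow> norm (Hf N a \<rho> s z - of_real (a 1)) < a 1"
    using Hf_large[where a=a and N=N and \<rho>=\<rho>, OF a1 N] by blast
  have "norm (complex_of_real (fr \<sigma>b) - complex_of_real (a 1)) < a 1"
    using \<sigma>b(2)[of "of_real \<sigma>b" 0] Hr[of \<sigma>b] by simp
  then have frb: "fr \<sigma>b > 0" by (simp flip: of_real_diff)
  have "norm (complex_of_real (fp \<sigma>b) - complex_of_real (a 1)) < a 1"
    using \<sigma>b(2)[of "of_real \<sigma>b" 1] Hp[of \<sigma>b] by simp
  then have fpb: "fp \<sigma>b > 0" by (simp flip: of_real_diff)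
  have contr: "continuous_on UNIV fr" unfolding fr_def by (intro continuous_intros)
  have contp: "continuous_on UNIV fp" unfolding fp_def by (intro continuous_intros)
  have nzr: "fr x \<noteq> 0" if "x > 0" for x
    using lemB[OF a1 N nz that, of 0 \<rho>] Hr[of x] by simp
  have nzp: "fp x \<noteq> 0" if "x > 0" for x
    using lemB[OF a1 N nz that, of 1 \<rho>] Hp[of x] by simp
  have fr0: "fr 0 \<ge> 0" using posl[OF contr nzr \<sigma>b(1) frb] by simp
  have fp0: "fp 0 \<ge> 0" using posl[OF contp nzp \<sigma>b(1) fpb] by simp
  have sumeq: "(\<Sum>n=1..N. a n * \<rho> n) = fr 0" unfolding fr_def by simp
  have dpeq: "dirichlet_poly N a 0 = of_real (fp 0)"
    using dp_eq[where \<rho>=\<rho>, of N a 0] Hp[of 0] by simp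
  have strict: "fr 0 > 0" if pos: "fp 0 > 0"
  proof (rule ccontr)
    assume "\<not> fr 0 > 0"
    then have z0: "fr 0 = 0" using fr0 by simp
    define F where "F m = Hf N a \<rho> (of_real (1 / (real m + 1)))" for m
    have ul: "uniform_limit (cball 0 1) F (Hf N a \<rho> (of_real 0)) sequentially"
      unfolding F_def by (rule Hf_unif[OF inv_Suc_tendsto])
    have nc: "\<not> Hf N a \<rho> (of_real 0) constant_on ball 0 1"
    proof (rule Hf_nonconst)
      show "Hf N a \<rho> (of_real 0) 1 \<noteq> Hf N a \<rho> (of_real 0) 0"
        using Hp[of 0] Hr[of 0] z0 pos by simp
      show "norm (0::complex) < 1" by simp
    qed
    have "Hf N a \<rho> (of_real 0) 0 \<noteq> 0"
    proof (rule Hurwitz_no_zeros[of "ball 0 1" F "Hf N a \<rho> (of_real 0)" 0])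
      show "open (ball (0::complex) 1)" "connected (ball (0::complex) 1)" by auto
      show "F m holomorphic_on ball 0 1" for m unfolding F_def by (rule Hf_hol_z)
      show "Hf N a \<rho> (of_real 0) holomorphic_on ball 0 1" by (rule Hf_hol_z)
      show "uniform_limit K' F (Hf N a \<rho> (of_real 0)) sequentially" if "compact K'" "K' \<subseteq> ball 0 1" for K'
        by (rule uniform_limit_on_subset[OF ul]) (use that ball_subset_cball in blast)
      show "\<not> Hf N a \<rho> (of_real 0) constant_on ball 0 1" by (rule nc)
      show "F m w \<noteq> 0" if "w \<in> ball 0 1" for m w
        unfolding F_def using that by (intro lemB[OF a1 N nz]) auto
      show "(0::complex) \<in> ball 0 1" by simp
    qed
    then show False using Hr[of 0] z0 by simp
  qed
  show ?thesis using sumeq dpeq fr0 fp0 strict by simp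
qed

end
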